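(* Let $G$ be a finite group. Then the power graph $\mathscr{G}(G)$ is overfull if and only if $G$ is cyclic of order $p^a$ for some odd prime $p$ and integer $a \geq 1$.
   Context: For a finite group $G$, the power graph $\mathscr{G}(G)$ is the simple graph with vertex set the elements of $G$, in which two distinct elements $a,b$ are adjacent if and only if one is a power of the other. For a finite simple graph $\Gamma$ on $n$ vertices with maximum vertex degree $\Delta(\Gamma)$, $\Gamma$ is called overfull if $|E(\Gamma)| / \lfloor n/2 \rfloor > \Delta(\Gamma)$. *)

theory Defs
  imports Complex_Main "HOL-Computational_Algebra.Primes" "HOL-Algebra.Elementary_Groups"
begin

definition power_adj :: "('a, 'b) monoid_scheme \<Rightarrow> 'a \<Rightarrow> 'a \<Rightarrow> bool" where
  "power_adj G a b \<longleftrightarrow> a \<in> carrier G \<and> b \<in> carrier G \<and> a \<noteq> b \<and>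
     ((\<exists>k::int. a = b [^]\<^bsub>G\<^esub> k) \<or> (\<exists>k::int. b = a [^]\<^bsub>G\<^esub> k))"

definition power_graph_edges :: "('a, 'b) monoid_scheme \<Rightarrow> 'a set set" where
  "power_graph_edges G = {{a, b} | a b. power_adj G a b}"

definition power_graph_degree :: "('a, 'b) monoid_scheme \<Rightarrow> 'a \<Rightarrow> nat" where
  "power_graph_degree G a = card {b. power_adj G a b}"

definition power_graph_max_degree :: "('a, 'b) monoid_scheme \<Rightarrow> nat" where
  "power_graph_max_degree G = Max (power_graph_degree G ` carrier G)"

definition power_graph_overfull :: "('a, 'b) monoid_scheme \<Rightarrow> bool" where
  "power_graph_overfull G \<longleftrightarrow>
     real (card (power_graph_edges G)) / real (card (carrier G) div 2)
       > real (power_graph_max_degree G)"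

end

theory Submission
  imports Defs "HOL-Algebra.Multiplicative_Group"
begin

lemma adj_sym: "power_adj G a b \<longleftrightarrow> power_adj G b a"
  unfolding power_adj_def by blast

definition P2 :: "('a, 'b) monoid_scheme \<Rightarrow> 'a set set" where
  "P2 G = {B. B \<subseteq> carrier G \<and> card B = 2}"

lemma edges_sub: "power_graph_edges G \<subseteq> P2 G"
  unfolding power_graph_edges_def P2_def power_adj_def by auto

lemma finite_P2: "finite (carrier G) \<Longrightarrow> finite (P2 G)"
  unfolding P2_def by (rule finite_subset[of _ "Pow (carrier G)"]) auto

lemma card_P2: "finite (carrier G) \<Longrightarrow> card (P2 G) = card (carrier G) choose 2"
  unfolding P2_def using n_subsets by blast

lemma nonedge:
  assumes "a \<in> carrier G" "b \<in> carrier G" "a \<noteq> b" "\<not> power_adj G a b"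
  shows "{a,b} \<in> P2 G - power_graph_edges G"
proof -
  have "{a,b} \<notin> power_graph_edges G"
  proof
    assume "{a,b} \<in> power_graph_edges G"
    then obtain c d where "{a,b} = {c,d}" "power_adj G c d" unfolding power_graph_edges_def by auto
    then show False using assms adj_sym[of G c d] by (auto simp: doubleton_eq_iff)
  qed
  then show ?thesis using assms unfolding P2_def by auto
qed

lemma nonedges_lower:
  assumes fin: "finite (carrier G)" and S: "S \<subseteq> carrier G \<times> carrier G"
    and ne: "\<And>a b. (a,b) \<in> S \<Longrightarrow> a \<noteq> b \<and> \<not> power_adj G a b"
    and inj: "inj_on (\<lambda>(a,b). {a,b}) S"
  shows "card S \<le> card (P2 G - power_graph_edges G)"
proof -
  have "(\<lambda>(a,b). {a,b}) ` S \<subseteq> P2 G - power_graph_edges G"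
  proof
    fix B assume "B \<in> (\<lambda>(a,b). {a,b}) ` S"
    then obtain a b where ab: "(a,b) \<in> S" "B = {a,b}" by auto
    have c: "a \<in> carrier G" "b \<in> carrier G" using ab(1) S by auto
    have "{a,b} \<in> P2 G - power_graph_edges G"
      using ne[OF ab(1)] by (intro nonedge[OF c]) auto
    then show "B \<in> P2 G - power_graph_edges G" using ab(2) by simp
  qed
  then have "card ((\<lambda>(a,b). {a,b}) ` S) \<le> card (P2 G - power_graph_edges G)"
    by (rule card_mono[OF finite_Diff[OF finite_P2[OF fin]]])
  then show ?thesis using card_image[OF inj] by simp
qed

lemma (in group) max_degree:
  assumes "finite (carrier G)"
  shows "power_graph_max_degree G = card (carrier G) - 1"
proof -
  have le: "power_graph_degree G a \<le> card (carrier G) - 1" for a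
  proof -
    show ?thesis
    proof (cases "a \<in> carrier G")
      case True
      have "{b. power_adj G a b} \<subseteq> carrier G - {a}" unfolding power_adj_def by auto
      then have "card {b. power_adj G a b} \<le> card (carrier G - {a})"
        by (intro card_mono) (auto simp: assms)
      also have "\<dots> = card (carrier G) - 1" using True by (simp add: card_Diff_singleton)
      finally show ?thesis unfolding power_graph_degree_def .
    next
      case False
      then have "{b. power_adj G a b} = {}" unfolding power_adj_def by auto
      then show ?thesis unfolding power_graph_degree_def by (metis card.empty zero_le)
    qed
  qed
  have one: "power_graph_degree G \<one> = card (carrier G) - 1"
  proof -
    have "{b. power_adj G \<one> b} = carrier G - {\<one>}"
    proof (intro equalityI subsetI)
      fix b assume "b \<in> {b. power_adj G \<one> b}"
      then show "b \<in> carrier G - {\<one>}" unfolding power_adj_def by auto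
    next
      fix b assume b: "b \<in> carrier G - {\<one>}"
      have "\<one> = b [^] (0::int)" by simp
      then show "b \<in> {b. power_adj G \<one> b}" using b unfolding power_adj_def by blast
    qed
    then show ?thesis unfolding power_graph_degree_def by (simp add: card_Diff_singleton)
  qed
  show ?thesis unfolding power_graph_max_degree_def
  proof (rule antisym)
    show "Max (power_graph_degree G ` carrier G) \<le> card (carrier G) - 1"
      using le assms by (subst Max_le_iff) auto
    show "card (carrier G) - 1 \<le> Max (power_graph_degree G ` carrier G)"
      using one assms by (metis Max_ge finite_imageI image_eqI one_closed)
  qed
qed

lemma arith_overfull:
  fixes n M N :: nat
  assumes "n \<ge> 1" "2 * M + 2 * N = n * (n - 1)"
  shows "real M / real (n div 2) > real (n - 1) \<longleftrightarrow> odd n \<and> 2 * N < n - 1"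
proof (cases "even n")
  case True
  then obtain q where q: "n = 2 * q" by auto
  with assms have "q \<ge> 1" by auto
  have "n div 2 = q" using q by simp
  have "2 * M \<le> 2 * q * (2 * q - 1)" using assms q by simp
  then have "M \<le> q * (2 * q - 1)" by simp
  then have "M \<le> q * (n - 1)" using q by simp
  then have "real M \<le> real (q * (n - 1))" by (simp only: of_nat_le_iff)
  then have "real M \<le> real q * real (n - 1)" by (simp only: of_nat_mult)
  then have "real M / real q \<le> real (n - 1)" using \<open>q \<ge> 1\<close>
    by (simp add: divide_le_eq mult.commute)
  then show ?thesis using True \<open>n div 2 = q\<close> by auto
next
  case False
  then obtain q where q: "n = 2 * q + 1" using oddE by blast
  have d: "n div 2 = q" using q by simp
  show ?thesis
  proof (cases "q = 0")
    case True
    then show ?thesis using q d by simp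
  next
    case False
    have e: "2 * M + 2 * N = (2 * q + 1) * (2 * q)" using assms q by simp
    have "real M / real q > real (n - 1) \<longleftrightarrow> real M > real (n - 1) * real q"
      using False by (simp add: pos_less_divide_eq)
    also have "\<dots> \<longleftrightarrow> M > 2 * q * q"
    proof -
      have "real (n - 1) * real q = real (2 * q * q)" using q by simp
      then show ?thesis by (simp only: of_nat_less_iff)
    qed
    also have "\<dots> \<longleftrightarrow> 2 * N < n - 1"
    proof -
      have e2: "M + N = q + 2 * (q * q)" using e by (simp add: algebra_simps)
      show ?thesis using e2 q by (simp add: algebra_simps, linarith)
    qed
    finally show ?thesis using d \<open>odd n\<close> by simp
  qed
qed

lemma (in group) overfull_iff:
  assumes fin: "finite (carrier G)"
  shows "power_graph_overfull G \<longleftrightarrow>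
    odd (card (carrier G)) \<and> 2 * card (P2 G - power_graph_edges G) < card (carrier G) - 1"
proof -
  let ?n = "card (carrier G)"
  let ?M = "card (power_graph_edges G)"
  let ?N = "card (P2 G - power_graph_edges G)"
  have fE: "finite (power_graph_edges G)" by (rule finite_subset[OF edges_sub finite_P2[OF fin]])
  have "?N = card (P2 G) - ?M" by (rule card_Diff_subset[OF fE edges_sub])
  moreover have "?M \<le> card (P2 G)" by (rule card_mono[OF finite_P2[OF fin] edges_sub])
  ultimately have "?M + ?N = card (P2 G)" by simp
  also have "\<dots> = ?n choose 2" by (rule card_P2[OF fin])
  finally have "2 * ?M + 2 * ?N = 2 * (?n choose 2)" by simp
  also have "\<dots> = ?n * (?n - 1)"
  proof -
    have "even (?n * (?n - 1))" by (cases "even ?n") auto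
    then show ?thesis by (simp add: choose_two)
  qed
  finally have e: "2 * ?M + 2 * ?N = ?n * (?n - 1)" .
  have "carrier G \<noteq> {}" using one_closed by blast
  then have "?n \<ge> 1" using fin by (simp add: Suc_leI card_gt_0_iff)
  show ?thesis unfolding power_graph_overfull_def max_degree[OF fin]
    using arith_overfull[OF \<open>?n \<ge> 1\<close> e] .
qed

lemma (in group) adj_iff:
  assumes "a \<in> carrier G" "b \<in> carrier G" "a \<noteq> b"
  shows "power_adj G a b \<longleftrightarrow> a \<in> generate G {b} \<or> b \<in> generate G {a}"
proof -
  have "a \<in> generate G {b} \<longleftrightarrow> (\<exists>k::int. a = b [^] k)" unfolding generate_pow[OF assms(2)] by auto
  moreover have "b \<in> generate G {a} \<longleftrightarrow> (\<exists>k::int. b = a [^] k)" unfolding generate_pow[OF assms(1)] by auto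
  ultimately show ?thesis using assms unfolding power_adj_def by simp
qed

lemma (in group) card_generate:
  assumes "x \<in> carrier G" shows "card (generate G {x}) = ord x"
  using generate_pow_card[OF assms] by (rule sym)

lemma (in group) noncyclic_bound:
  assumes fin: "finite (carrier G)" and nc: "\<not> cyclic_group G"
  shows "card (carrier G) \<le> 2 * card (P2 G - power_graph_edges G)"
proof -
  let ?n = "card (carrier G)"
  have ne: "carrier G \<noteq> {}" by auto
  obtain x where x: "x \<in> carrier G" "\<And>y. y \<in> carrier G \<Longrightarrow> ord y \<le> ord x"
  proof -
    have "Max (ord ` carrier G) \<in> ord ` carrier G" using fin ne by (intro Max_in) auto
    then obtain x where "x \<in> carrier G" "ord x = Max (ord ` carrier G)" by auto
    then show ?thesis using that fin by (metis Max_ge finite_imageI image_eqI)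
  qed
  define C where "C = generate G {x}"
  have Csub: "C \<subseteq> carrier G" unfolding C_def using x(1) generate_incl by auto
  have xC: "x \<in> C" unfolding C_def by (rule generate.incl) simp
  have cardC: "card C = ord x" unfolding C_def by (rule card_generate[OF x(1)])
  have "C \<noteq> carrier G"
  proof
    assume "C = carrier G"
    then have "carrier G = range (\<lambda>n::int. x [^] n)" unfolding C_def generate_pow[OF x(1)] by auto
    then show False using nc x(1) cyclic_group by blast
  qed
  then have "card C < ?n" using Csub fin by (meson psubsetI psubset_card_mono)
  moreover have "ord x dvd ?n" using ord_dvd_group_order[OF x(1)] by (simp add: order_def)
  ultimately have half: "2 * ord x \<le> ?n"
  proof -
    assume lt: "card C < ?n" and dv: "ord x dvd ?n"
    obtain k where k: "?n = ord x * k" using dv by blast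
    have "k \<noteq> 0" using k lt by (cases k) auto
    moreover have "k \<noteq> 1" using k lt cardC by auto
    ultimately have "k \<ge> 2" by simp
    then show ?thesis using k by (metis mult.commute mult_le_mono2)
  qed
  define S where "S = (carrier G - C) \<times> {x}"
  have "card S \<le> card (P2 G - power_graph_edges G)"
  proof (rule nonedges_lower[OF fin])
    show "S \<subseteq> carrier G \<times> carrier G" unfolding S_def using x(1) by auto
    show "inj_on (\<lambda>(a, b). {a, b}) S"
    proof (rule inj_onI)
      fix p q assume p: "p \<in> S" and q: "q \<in> S" and e: "(\<lambda>(a, b). {a, b}) p = (\<lambda>(a, b). {a, b}) q"
      obtain z where pz: "p = (z, x)" "z \<notin> C" using p unfolding S_def by auto
      obtain w where qw: "q = (w, x)" "w \<notin> C" using q unfolding S_def by auto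
      have "{z, x} = {w, x}" using e pz qw by simp
      then have "z = w" using pz(2) qw(2) xC by (metis doubleton_eq_iff)
      then show "p = q" using pz qw by simp
    qed
    fix z b assume zb: "(z, b) \<in> S"
    then have z: "z \<in> carrier G" "z \<notin> C" "b = x" unfolding S_def by auto
    have "z \<noteq> x" using z xC by auto
    moreover have "\<not> power_adj G z x"
    proof
      assume "power_adj G z x"
      then have "z \<in> C \<or> x \<in> generate G {z}" using adj_iff[OF z(1) x(1) \<open>z \<noteq> x\<close>] C_def by auto
      then have "x \<in> generate G {z}" using z by auto
      then have sub: "C \<subseteq> generate G {z}" unfolding C_def
        by (intro generate_subgroup_incl generate_is_subgroup) (use z(1) in auto)
      have fz: "finite (generate G {z})" using generate_incl[of "{z}"] z(1) fin finite_subset by auto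
      have "card (generate G {z}) = ord z" by (rule card_generate[OF z(1)])
      also have "\<dots> \<le> card C" using x(2)[OF z(1)] cardC by simp
      finally have "C = generate G {z}" by (rule card_seteq[OF fz sub])
      moreover have "z \<in> generate G {z}" by (rule generate.incl) simp
      ultimately show False using z by auto
    qed
    ultimately show "z \<noteq> b \<and> \<not> power_adj G z b" using z by auto
  qed
  moreover have "card S = ?n - ord x"
  proof -
    have "card S = card (carrier G - C) * card {x}" unfolding S_def by (rule card_cartesian_product)
    also have "\<dots> = card (carrier G - C)" by simp
    also have "\<dots> = ?n - card C" by (rule card_Diff_subset[OF finite_subset[OF Csub fin] Csub])
    finally show ?thesis using cardC by simp
  qed
  ultimately show ?thesis using half by linarith
qed

lemma (in group) ord_generator:
  assumes g: "g \<in> carrier G" and gen: "carrier G = range (\<lambda>k::int. g [^] k)"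
  shows "ord g = card (carrier G)"
proof -
  have "generate G {g} = carrier G" unfolding generate_pow[OF g] gen by auto
  then show ?thesis using card_generate[OF g] by simp
qed

lemma (in group) triv_coprime:
  fixes A B :: nat
  assumes z: "z \<in> carrier G" and "z [^] A = \<one>" "z [^] B = \<one>" and cop: "coprime A B"
  shows "z = \<one>"
proof -
  have "ord z dvd A" "ord z dvd B" using assms pow_eq_id[OF z] by auto
  then have "ord z dvd gcd A B" by simp
  then have "ord z = 1" using cop by simp
  then show ?thesis using ord_eq_1[OF z] by simp
qed

lemma (in group) pow_int_kill:
  fixes B :: nat
  assumes w: "w \<in> carrier G" and wB: "w [^] B = \<one>"
  shows "(w [^] (k::int)) [^] B = \<one>"
proof -
  have "(w [^] k) [^] B = (w [^] k) [^] (int B)" by (simp add: int_pow_int)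
  also have "\<dots> = w [^] (k * int B)" by (rule int_pow_pow[OF w])
  also have "\<dots> = w [^] (int B * k)" by (simp add: mult.commute)
  also have "\<dots> = (w [^] (int B)) [^] k" by (rule int_pow_pow[OF w, symmetric])
  also have "\<dots> = \<one>" using wB by (simp add: int_pow_int)
  finally show ?thesis .
qed

lemma (in group) roots_card:
  fixes A B :: nat
  assumes fin: "finite (carrier G)" and g: "g \<in> carrier G"
    and gen: "carrier G = range (\<lambda>k::int. g [^] k)"
    and n: "card (carrier G) = A * B" and A: "A > 1" and B: "B > 1"
  shows "A - 1 \<le> card {z \<in> carrier G. z [^] A = \<one> \<and> z \<noteq> \<one>}"
proof -
  have og: "ord g = A * B" using ord_generator[OF g gen] n by simp
  let ?f = "\<lambda>k::nat. g [^] (B * k)"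
  have inj: "inj_on ?f {1..<A}"
  proof (rule inj_onI)
    fix k l assume k: "k \<in> {1..<A}" and l: "l \<in> {1..<A}" and e: "?f k = ?f l"
    have bnd: "B * i \<in> {0 .. ord g - 1}" if i: "i \<in> {1..<A}" for i
    proof -
      have "i + 1 \<le> A" using i by simp
      then have "B * (i + 1) \<le> B * A" by (rule mult_le_mono2)
      then have "B * i + B \<le> A * B" by (simp add: algebra_simps)
      then show ?thesis using og B by simp
    qed
    have "B * k \<in> {0 .. ord g - 1}" "B * l \<in> {0 .. ord g - 1}" using bnd k l by auto
    then have "B * k = B * l" using inj_onD[OF ord_inj[OF g]] e by blast
    then show "k = l" using B by simp
  qed
  have sub: "?f ` {1..<A} \<subseteq> {z \<in> carrier G. z [^] A = \<one> \<and> z \<noteq> \<one>}"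
  proof
    fix z assume "z \<in> ?f ` {1..<A}"
    then obtain k where k: "k \<in> {1..<A}" "z = g [^] (B * k)" by auto
    have "z [^] A = g [^] (B * k * A)" using k(2) nat_pow_pow[OF g] by simp
    also have "\<dots> = g [^] (ord g * k)" using og by (simp add: algebra_simps)
    also have "\<dots> = \<one>" using pow_eq_id[OF g] by simp
    finally have z1: "z [^] A = \<one>" .
    have "z \<noteq> \<one>"
    proof
      assume "z = \<one>"
      then have "ord g dvd B * k" using k(2) pow_eq_id[OF g] by simp
      then have "A * B dvd k * B" using og by (simp add: mult.commute)
      then have "A dvd k" using B by simp
      then show False using k(1) by (auto dest: dvd_imp_le)
    qed
    then show "z \<in> {z \<in> carrier G. z [^] A = \<one> \<and> z \<noteq> \<one>}" using z1 k(2) g by simp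
  qed
  have "A - 1 = card (?f ` {1..<A})" using card_image[OF inj] by simp
  also have "\<dots> \<le> card {z \<in> carrier G. z [^] A = \<one> \<and> z \<noteq> \<one>}"
    by (rule card_mono[OF _ sub]) (use fin in simp)
  finally show ?thesis .
qed

lemma (in group) cyclic_split_bound:
  fixes A B :: nat
  assumes fin: "finite (carrier G)" and g: "g \<in> carrier G"
    and gen: "carrier G = range (\<lambda>k::int. g [^] k)"
    and n: "card (carrier G) = A * B" and A: "A > 1" and B: "B > 1" and cop: "coprime A B"
  shows "(A - 1) * (B - 1) \<le> card (P2 G - power_graph_edges G)"
proof -
  define H where "H = {z \<in> carrier G. z [^] A = \<one> \<and> z \<noteq> \<one>}"
  define K where "K = {z \<in> carrier G. z [^] B = \<one> \<and> z \<noteq> \<one>}"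
  have cH: "A - 1 \<le> card H" unfolding H_def by (rule roots_card[OF fin g gen n A B])
  have n': "card (carrier G) = B * A" using n by simp
  have cK: "B - 1 \<le> card K" unfolding K_def by (rule roots_card[OF fin g gen n' B A])
  have disj: False if "z \<in> H" "z \<in> K" for z
    using that triv_coprime[OF _ _ _ cop, of z] unfolding H_def K_def by auto
  define S where "S = H \<times> K"
  have "card S \<le> card (P2 G - power_graph_edges G)"
  proof (rule nonedges_lower[OF fin])
    show "S \<subseteq> carrier G \<times> carrier G" unfolding S_def H_def K_def by auto
    show "inj_on (\<lambda>(a, b). {a, b}) S"
    proof (rule inj_onI)
      fix p q assume p: "p \<in> S" and q: "q \<in> S" and e: "(\<lambda>(a, b). {a, b}) p = (\<lambda>(a, b). {a, b}) q"
      obtain z w where pz: "p = (z, w)" "z \<in> H" "w \<in> K" using p unfolding S_def by auto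
      obtain z' w' where qz: "q = (z', w')" "z' \<in> H" "w' \<in> K" using q unfolding S_def by auto
      have "{z, w} = {z', w'}" using e pz qz by simp
      then have "(z = z' \<and> w = w') \<or> (z = w' \<and> w = z')" by (simp add: doubleton_eq_iff)
      then have "z = z' \<and> w = w'" using disj pz qz by blast
      then show "p = q" using pz qz by simp
    qed
    fix z w assume zw: "(z, w) \<in> S"
    then have z: "z \<in> carrier G" "z [^] A = \<one>" "z \<noteq> \<one>" and w: "w \<in> carrier G" "w [^] B = \<one>" "w \<noteq> \<one>"
      unfolding S_def H_def K_def by auto
    have "z \<noteq> w" using disj zw unfolding S_def by blast
    moreover have "\<not> power_adj G z w"
    proof
      assume "power_adj G z w"
      then have "(\<exists>k::int. z = w [^] k) \<or> (\<exists>k::int. w = z [^] k)" unfolding power_adj_def by blast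
      then show False
      proof
        assume "\<exists>k::int. z = w [^] k"
        then obtain k :: int where "z = w [^] k" by blast
        then have "z [^] B = \<one>" using pow_int_kill[OF w(1) w(2)] by simp
        then show False using triv_coprime[OF z(1) z(2) _ cop] z(3) by simp
      next
        assume "\<exists>k::int. w = z [^] k"
        then obtain k :: int where "w = z [^] k" by blast
        then have "w [^] A = \<one>" using pow_int_kill[OF z(1) z(2)] by simp
        then show False using triv_coprime[OF w(1) _ w(2) cop] w(3) by simp
      qed
    qed
    ultimately show "z \<noteq> w \<and> \<not> power_adj G z w" by simp
  qed
  moreover have "card S = card H * card K" unfolding S_def by (rule card_cartesian_product)
  moreover have "(A - 1) * (B - 1) \<le> card H * card K" by (rule mult_le_mono[OF cH cK])
  ultimately show ?thesis by linarith
qed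

lemma primepow_dvd_total:
  fixes p x y :: nat
  assumes p: "prime p" and "x dvd p ^ a" "y dvd p ^ a"
  shows "x dvd y \<or> y dvd x"
proof -
  obtain s where s: "x = p ^ s" using assms(2) divides_primepow_nat[OF p, of x a] by auto
  obtain t where t: "y = p ^ t" using assms(3) divides_primepow_nat[OF p, of y a] by auto
  show ?thesis
  proof (cases "s \<le> t")
    case True
    then have "p ^ s dvd p ^ t" by (rule le_imp_power_dvd)
    then show ?thesis using s t by simp
  next
    case False
    then have "t \<le> s" by simp
    then have "p ^ t dvd p ^ s" by (rule le_imp_power_dvd)
    then show ?thesis using s t by simp
  qed
qed

lemma gcd_int_nat: "gcd (i::int) (int n) = int (gcd (nat \<bar>i\<bar>) n)"
  by (simp only: gcd_int_def abs_of_nat nat_int)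

lemma (in group) pow_solve:
  assumes g: "g \<in> carrier G" and d: "gcd i (int (ord g)) dvd j"
  shows "\<exists>k::int. g [^] j = (g [^] i) [^] k"
proof -
  obtain u v where uv: "u * i + v * int (ord g) = gcd i (int (ord g))" using bezout_int by blast
  obtain c where c: "j = gcd i (int (ord g)) * c" using d by blast
  have "(g [^] i) [^] (u * c) = g [^] (i * (u * c))" by (rule int_pow_pow[OF g])
  also have "\<dots> = g [^] j"
  proof -
    have "j = (u * i + v * int (ord g)) * c" using uv c by simp
    then have "j - i * (u * c) = int (ord g) * (v * c)" by (simp add: algebra_simps)
    then have "int (ord g) dvd (j - i * (u * c))" by simp
    then show ?thesis using int_pow_eq[OF g] by simp
  qed
  finally have "g [^] j = (g [^] i) [^] (u * c)" by simp
  then show ?thesis ..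
qed

lemma (in group) primepow_complete:
  assumes fin: "finite (carrier G)" and g: "g \<in> carrier G"
    and gen: "carrier G = range (\<lambda>k::int. g [^] k)"
    and n: "card (carrier G) = p ^ a" and p: "prime p"
  shows "P2 G - power_graph_edges G = {}"
proof -
  have og: "ord g = p ^ a" using ord_generator[OF g gen] n by simp
  have "B \<in> power_graph_edges G" if B: "B \<in> P2 G" for B
  proof -
    obtain x y where xy: "B = {x, y}" "x \<noteq> y" using B unfolding P2_def by (auto simp: card_2_iff)
    have xyc: "x \<in> carrier G" "y \<in> carrier G" using B xy unfolding P2_def by auto
    obtain i where i: "x = g [^] (i::int)" using xyc(1) gen by auto
    obtain j where j: "y = g [^] (j::int)" using xyc(2) gen by auto
    define e1 where "e1 = gcd (nat \<bar>i\<bar>) (ord g)"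
    define e2 where "e2 = gcd (nat \<bar>j\<bar>) (ord g)"
    have d1: "gcd i (int (ord g)) = int e1" unfolding e1_def by (rule gcd_int_nat)
    have d2: "gcd j (int (ord g)) = int e2" unfolding e2_def by (rule gcd_int_nat)
    have "e1 dvd ord g" "e2 dvd ord g" unfolding e1_def e2_def by (rule gcd_dvd2)+
    then have "e1 dvd p ^ a" "e2 dvd p ^ a" unfolding og .
    then have "e1 dvd e2 \<or> e2 dvd e1" by (rule primepow_dvd_total[OF p])
    then have "int e1 dvd int e2 \<or> int e2 dvd int e1" by simp
    then have "(\<exists>k::int. y = x [^] k) \<or> (\<exists>k::int. x = y [^] k)"
    proof
      assume "int e1 dvd int e2"
      then have "gcd i (int (ord g)) dvd j" using d1 d2 gcd_dvd1[of j "int (ord g)"] by (metis dvd_trans)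
      then show ?thesis using pow_solve[OF g, of i j] i j by simp
    next
      assume "int e2 dvd int e1"
      then have "gcd j (int (ord g)) dvd i" using d1 d2 gcd_dvd1[of i "int (ord g)"] by (metis dvd_trans)
      then show ?thesis using pow_solve[OF g, of j i] i j by simp
    qed
    then have "power_adj G y x" unfolding power_adj_def using xyc xy(2) by auto
    then have "{y, x} \<in> power_graph_edges G" unfolding power_graph_edges_def by auto
    then show ?thesis using xy(1) by (simp add: insert_commute)
  qed
  then show ?thesis by blast
qed

lemma split_nonprimepow:
  fixes n :: nat
  assumes n1: "n > 1" and np: "\<not> (\<exists>p a. prime p \<and> n = p ^ a)"
  shows "\<exists>A B. n = A * B \<and> coprime A B \<and> A > 1 \<and> B > 1"
proof -
  obtain p where p: "prime p" "p dvd n" using prime_factor_nat[of n] n1 by auto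
  have "n \<noteq> 0" using n1 by simp
  moreover have "\<not> is_unit p" using prime_gt_1_nat[OF p(1)] by simp
  ultimately obtain y where y: "n = p ^ multiplicity p n * y" "\<not> p dvd y"
    by (rule multiplicity_decompose')
  define m where "m = multiplicity p n"
  have ny: "n = p ^ m * y" using y(1) m_def by simp
  have "m \<noteq> 0"
  proof
    assume "m = 0"
    then have "n = y" using ny by simp
    then show False using p(2) y(2) by simp
  qed
  moreover have "p > 1" using p(1) prime_gt_1_nat by blast
  ultimately have A: "p ^ m > 1" using one_less_power[of p m] by simp
  have "y \<noteq> 1"
  proof
    assume "y = 1"
    then have "n = p ^ m" using ny by simp
    then show False using np p(1) by blast
  qed
  moreover have "y \<noteq> 0" using ny \<open>n \<noteq> 0\<close> by auto
  ultimately have B: "y > 1" by simp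
  have "coprime p y" using prime_imp_coprime[OF p(1) y(2)] .
  then have "coprime (p ^ m) y" by simp
  then show ?thesis using ny A B by blast
qed

lemma arith_AB:
  fixes A B :: nat
  assumes "A \<ge> 3" "B \<ge> 3"
  shows "A * B - 1 \<le> 2 * ((A - 1) * (B - 1))"
proof -
  obtain a b where ab: "A = a + 3" "B = b + 3" using assms by (metis add.commute le_Suc_ex)
  show ?thesis unfolding ab by (simp add: algebra_simps)
qed

theorem mainTheorem1:
  fixes G :: "('a, 'b) monoid_scheme"
  assumes "group G" and "finite (carrier G)"
  shows "power_graph_overfull G \<longleftrightarrow>
    (cyclic_group G \<and> (\<exists>p a::nat. prime p \<and> odd p \<and> a \<ge> 1 \<and> card (carrier G) = p ^ a))"
proof -
  interpret group G by fact
  note fin = assms(2)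
  let ?n = "card (carrier G)"
  let ?N = "card (P2 G - power_graph_edges G)"
  have ov: "power_graph_overfull G \<longleftrightarrow> odd ?n \<and> 2 * ?N < ?n - 1" by (rule overfull_iff[OF fin])
  show ?thesis
  proof
    assume "power_graph_overfull G"
    then have odd: "odd ?n" and lt: "2 * ?N < ?n - 1" using ov by auto
    have cyc: "cyclic_group G"
    proof (rule ccontr)
      assume "\<not> cyclic_group G"
      then have "?n \<le> 2 * ?N" by (rule noncyclic_bound[OF fin])
      then show False using lt by simp
    qed
    then obtain g where g: "g \<in> carrier G" and gen: "carrier G = range (\<lambda>k::int. g [^]\<^bsub>G\<^esub> k)"
      using cyclic_group by blast
    have n1: "?n > 1" using lt by simp
    have pp: "\<exists>p a. prime p \<and> ?n = p ^ a"
    proof (rule ccontr)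
      assume "\<not> (\<exists>p a. prime p \<and> ?n = p ^ a)"
      then obtain A B where AB: "?n = A * B" "coprime A B" "A > 1" "B > 1"
        using split_nonprimepow[OF n1] by blast
      have "odd A" "odd B" using odd AB(1) by auto
      then have A3: "A \<ge> 3" and B3: "B \<ge> 3" using AB(3,4) by (auto elim!: oddE)
      have "(A - 1) * (B - 1) \<le> ?N" by (rule cyclic_split_bound[OF fin g gen AB(1) AB(3) AB(4) AB(2)])
      moreover have "A * B - 1 \<le> 2 * ((A - 1) * (B - 1))" by (rule arith_AB[OF A3 B3])
      ultimately show False using lt AB(1) by linarith
    qed
    then obtain p a where p: "prime p" "?n = p ^ a" by blast
    have "a \<ge> 1"
    proof (rule ccontr)
      assume "\<not> a \<ge> 1"
      then have "a = 0" by simp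
      then show False using p(2) n1 by simp
    qed
    moreover have "odd p"
    proof
      assume "even p"
      then have "even (p ^ a)" using \<open>a \<ge> 1\<close> by simp
      then show False using odd p(2) by simp
    qed
    ultimately show "cyclic_group G \<and> (\<exists>p a::nat. prime p \<and> odd p \<and> a \<ge> 1 \<and> ?n = p ^ a)"
      using cyc p by blast
  next
    assume "cyclic_group G \<and> (\<exists>p a::nat. prime p \<and> odd p \<and> a \<ge> 1 \<and> ?n = p ^ a)"
    then obtain p a where cyc: "cyclic_group G" and p: "prime p" "odd p" "a \<ge> 1" "?n = p ^ a" by blast
    obtain g where g: "g \<in> carrier G" and gen: "carrier G = range (\<lambda>k::int. g [^]\<^bsub>G\<^esub> k)"
      using cyc cyclic_group by blast
    have "P2 G - power_graph_edges G = {}" by (rule primepow_complete[OF fin g gen p(4) p(1)])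
    then have N0: "?N = 0" by (metis card.empty)
    have "odd ?n" using p(2,4) by simp
    moreover have "?n > 1"
    proof -
      have "p > 1" using p(1) prime_gt_1_nat by blast
      then show ?thesis using p(3,4) one_less_power[of p a] by simp
    qed
    ultimately show "power_graph_overfull G" using ov N0 by simp
  qed
qed

end
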